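(* Let $S$ be a virtual flat biquandle, let $C_n(S)$ be the free abelian group on $n$-tuples $(a_1,\dots,a_n)$ of elements of $S$ ($C_0(S)=0$), and define $\partial_n:C_n(S)\to C_{n-1}(S)$ by $\partial_n=0$ for $n\le1$ and, for $n\ge2$, $$\partial_n(a_1,\dots,a_n)=\sum_{i=1}^n(-1)^i\big((a_1\ast a_i,\dots,a_{i-1}\ast a_i,a_{i+1},\dots,a_n)-(a_1,\dots,a_{i-1},a_{i+1}\circ a_i,\dots,a_n\circ a_i)\big).$$ Then $\partial_{n-1}\circ\partial_n=0$ for all $n$.
   Context: A virtual flat biquandle is a set $S$ with two binary operations $a\ast b$, $a\circ b$; writing $S_b(a)=a\ast b$, $T_b(a)=a\circ b$, for all $a,b\in S$: (1) $S_aS_b=S_bS_a$, $T_aT_b=T_bT_a$, $S_aT_b=T_bS_a$; (2) $S_a=S_{T_b(a)}=S_{S_b(a)}$, $T_a=T_{S_b(a)}=T_{T_b(a)}$; (3) $T_aS_a=S_aT_a=\mathrm{id}$. *)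

theory Defs
  imports "HOL-Library.Poly_Mapping"
begin

text \<open>Virtual flat biquandle on the whole type 'a, with a * b = star a b and
  a \<circ> b = circ a b; S_b(a) = star a b, T_b(a) = circ a b.\<close>
definition virtual_flat_biquandle :: "('a \<Rightarrow> 'a \<Rightarrow> 'a) \<Rightarrow> ('a \<Rightarrow> 'a \<Rightarrow> 'a) \<Rightarrow> bool" where
  "virtual_flat_biquandle star circ \<longleftrightarrow>
     (\<forall>a b x. star (star x b) a = star (star x a) b) \<and>
     (\<forall>a b x. circ (circ x b) a = circ (circ x a) b) \<and>
     (\<forall>a b x. star (circ x b) a = circ (star x a) b) \<and>
     (\<forall>a b x. star x a = star x (circ a b) \<and> star x a = star x (star a b)) \<and>
     (\<forall>a b x. circ x a = circ x (star a b) \<and> circ x a = circ x (circ a b)) \<and>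
     (\<forall>a x. circ (star x a) a = x \<and> star (circ x a) a = x)"

text \<open>Chains: C_n(S) is the free abelian group on n-tuples, i.e. elements of
  finitely supported int-valued functions on lists, on lists of length n (C_0 = 0: supported nowhere).\<close>
definition chain :: "nat \<Rightarrow> ('a list \<Rightarrow>\<^sub>0 int) \<Rightarrow> bool" where
  "chain n c \<longleftrightarrow> (n = 0 \<longrightarrow> c = 0) \<and> (\<forall>xs \<in> Poly_Mapping.keys c. length xs = n)"

text \<open>Boundary on a generator (a_1,...,a_n); a_i = xs ! (i-1).\<close>
definition bd_gen :: "('a \<Rightarrow> 'a \<Rightarrow> 'a) \<Rightarrow> ('a \<Rightarrow> 'a \<Rightarrow> 'a) \<Rightarrow> nat \<Rightarrow> 'a list \<Rightarrow> ('a list \<Rightarrow>\<^sub>0 int)" where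
  "bd_gen star circ n xs =
     (if n \<le> 1 then 0 else
      (\<Sum>i = 1..n. frag_cmul ((-1) ^ i)
         (frag_of (map (\<lambda>a. star a (xs ! (i-1))) (take (i-1) xs) @ drop i xs)
          - frag_of (take (i-1) xs @ map (\<lambda>a. circ a (xs ! (i-1))) (drop i xs)))))"

definition bd :: "('a \<Rightarrow> 'a \<Rightarrow> 'a) \<Rightarrow> ('a \<Rightarrow> 'a \<Rightarrow> 'a) \<Rightarrow> nat \<Rightarrow> ('a list \<Rightarrow>\<^sub>0 int) \<Rightarrow> ('a list \<Rightarrow>\<^sub>0 int)" where
  "bd star circ n c = frag_extend (bd_gen star circ n) c"

end

theory Submission
  imports Defs
begin

definition face :: "('a \<Rightarrow> 'a \<Rightarrow> 'a) \<Rightarrow> ('a \<Rightarrow> 'a \<Rightarrow> 'a) \<Rightarrow> bool \<Rightarrow> nat \<Rightarrow> 'a list \<Rightarrow> 'a list" where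
  "face star circ e i xs = (if e then take (i-1) xs @ map (\<lambda>a. circ a (xs ! (i-1))) (drop i xs)
     else map (\<lambda>a. star a (xs ! (i-1))) (take (i-1) xs) @ drop i xs)"

lemma length_face: "1 \<le> i \<Longrightarrow> i \<le> length xs \<Longrightarrow> length (face star circ e i xs) = length xs - 1"
  by (auto simp: face_def)

lemma nth_face: "1 \<le> i \<Longrightarrow> i \<le> length xs \<Longrightarrow> k < length xs - 1 \<Longrightarrow>
  face star circ e i xs ! k = (if k < i - 1 then (if e then xs!k else star (xs!k) (xs!(i-1)))
     else (if e then circ (xs!(k+1)) (xs!(i-1)) else xs!(k+1)))"
  by (auto simp: face_def nth_append min_def)

lemma face_face:
  assumes V: "virtual_flat_biquandle star circ"
    and ij: "1 \<le> i" "i < j" "j \<le> length xs"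
  shows "face star circ e i (face star circ d j xs) = face star circ d (j-1) (face star circ e i xs)"
proof -
  from V have A1: "\<And>a b x. star (star x b) a = star (star x a) b"
    and A2: "\<And>a b x. circ (circ x b) a = circ (circ x a) b"
    and A3: "\<And>a b x. star (circ x b) a = circ (star x a) b"
    and A4: "\<And>a b x. star x (circ a b) = star x a" "\<And>a b x. star x (star a b) = star x a"
    and A5: "\<And>a b x. circ x (star a b) = circ x a" "\<And>a b x. circ x (circ a b) = circ x a"
    unfolding virtual_flat_biquandle_def by metis+
  show ?thesis
  proof (rule nth_equalityI)
    show "length (face star circ e i (face star circ d j xs)) = length (face star circ d (j-1) (face star circ e i xs))"
      using ij by (simp add: length_face)
  next
    fix k assume k: "k < length (face star circ e i (face star circ d j xs))"
    hence k': "k < length xs - 2" using ij by (simp add: length_face)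
    show "face star circ e i (face star circ d j xs) ! k = face star circ d (j-1) (face star circ e i xs) ! k"
      using ij k'
    proof -
      define i0 where "i0 = i - 1"
      define j0 where "j0 = j - 2"
      have ii: "i = Suc i0" and jj: "j = Suc (Suc j0)" using ij unfolding i0_def j0_def by simp_all
      show ?thesis using ij k' unfolding ii jj
        apply (cases e; cases d)
           apply (auto simp: length_face nth_face A4 A5 A3)
        by (metis A1 A2)+
    qed
  qed
qed

definition sg :: "nat \<Rightarrow> bool \<Rightarrow> int" where
  "sg i e = (if e then - ((-1)^i) else (-1)^i)"

lemma sg_Suc: "sg (Suc i) e = - sg i e"
  by (simp add: sg_def)

lemma frag_cmul_diff2: "frag_cmul c (a - b) = frag_cmul c a - frag_cmul c b"
  by (rule poly_mapping_eqI) (simp add: lookup_minus algebra_simps)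

lemma bd_gen_eq: "2 \<le> n \<Longrightarrow> bd_gen star circ n xs =
   (\<Sum>i=1..n. \<Sum>e\<in>UNIV. frag_cmul (sg i e) (frag_of (face star circ e i xs)))"
  unfolding bd_gen_def
  by (auto simp: UNIV_bool sg_def face_def frag_cmul_diff2 intro!: sum.cong)

lemma dd_gen:
  assumes V: "virtual_flat_biquandle star circ" and len: "length xs = n" and n3: "3 \<le> n"
  shows "frag_extend (bd_gen star circ (n-1)) (bd_gen star circ n xs) = 0"
proof -
  let ?F = "face star circ"
  define T where "T = (\<lambda>(i,j). \<Sum>e\<in>UNIV. \<Sum>d\<in>UNIV. frag_cmul (sg i e * sg j d) (frag_of (?F e i (?F d j xs))))"
  have "frag_extend (bd_gen star circ (n-1)) (bd_gen star circ n xs)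
     = (\<Sum>j=1..n. \<Sum>d\<in>UNIV. frag_cmul (sg j d) (bd_gen star circ (n-1) (?F d j xs)))"
    using n3 by (simp add: bd_gen_eq frag_extend_sum frag_extend_cmul o_def)
  also have "\<dots> = (\<Sum>j=1..n. \<Sum>d\<in>UNIV. \<Sum>i=1..n-1. \<Sum>e\<in>UNIV. frag_cmul (sg i e * sg j d) (frag_of (?F e i (?F d j xs))))"
    using n3 by (simp add: bd_gen_eq frag_cmul_sum mult.commute)
  also have "\<dots> = (\<Sum>j=1..n. \<Sum>i=1..n-1. T (i,j))"
    unfolding T_def by (simp add: UNIV_bool sum.distrib add_ac)
  also have "\<dots> = (\<Sum>p\<in>{1..n-1}\<times>{1..n}. T p)"
    by (subst sum.swap) (simp add: sum.cartesian_product)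
  also have "\<dots> = 0"
  proof -
    define A where "A = {1..n-1}\<times>{1..n}"
    define P where "P = {p\<in>A. fst p < snd p}"
    define Q where "Q = {p\<in>A. snd p \<le> fst p}"
    define g where "g = (\<lambda>(i::nat,j::nat). (j, Suc i))"
    have fin: "finite A" unfolding A_def by simp
    have AU: "A = P \<union> Q" "P \<inter> Q = {}" unfolding P_def Q_def by auto
    have canc: "T p = - T (g p)" if "p \<in> Q" for p
    proof -
      obtain i j where p: "p = (i,j)" by fastforce
      have ij: "1 \<le> j" "j \<le> i" "i \<le> n - 1" using that unfolding p Q_def A_def by auto
      have ff: "?F e j (?F d (Suc i) xs) = ?F d i (?F e j xs)" for e d
        using face_face[OF V, of j "Suc i" xs e d] ij len n3 by simp
      have "T (g p) = (\<Sum>e\<in>UNIV. \<Sum>d\<in>UNIV. - frag_cmul (sg i d * sg j e) (frag_of (?F d i (?F e j xs))))"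
        unfolding T_def g_def p by (simp add: ff sg_Suc mult.commute)
      also have "\<dots> = - T p"
        unfolding T_def p by (simp add: UNIV_bool add_ac)
      finally show ?thesis by simp
    qed
    have gim: "g ` Q = P"
    proof
      show "g ` Q \<subseteq> P" unfolding g_def Q_def P_def A_def by auto
    next
      show "P \<subseteq> g ` Q"
      proof
        fix p assume "p \<in> P"
        then obtain a b where p: "p = (a,b)" "1 \<le> a" "a < b" "b \<le> n" unfolding P_def A_def by auto
        hence "(b - 1, a) \<in> Q" "g (b - 1, a) = p" unfolding Q_def A_def g_def by auto
        thus "p \<in> g ` Q" by (metis image_eqI)
      qed
    qed
    have ginj: "inj_on g Q" unfolding g_def inj_on_def by auto
    have "sum T A = sum T P + sum T Q"
      using AU fin by (simp add: sum.union_disjoint)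
    also have "sum T Q = - sum (T \<circ> g) Q"
      using canc by (simp add: sum_negf)
    also have "sum (T \<circ> g) Q = sum T P"
      using sum.reindex[OF ginj, of T] gim by simp
    finally show ?thesis unfolding A_def by simp
  qed
  finally show ?thesis .
qed

theorem lemma5p1:
  fixes star circ :: "'a \<Rightarrow> 'a \<Rightarrow> 'a" and n :: nat and c :: "'a list \<Rightarrow>\<^sub>0 int"
  assumes "virtual_flat_biquandle star circ"
    and "chain n c"
  shows "bd star circ (n - 1) (bd star circ n c) = 0"
proof (cases "3 \<le> n")
  case False
  hence "n - 1 \<le> 1" by simp
  hence "\<And>xs. bd_gen star circ (n-1) xs = 0" by (simp add: bd_gen_def)
  thus ?thesis unfolding bd_def by (simp add: frag_extend_def)
next
  case True
  have keys: "Poly_Mapping.keys c \<subseteq> {xs. length xs = n}"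
    using assms(2) unfolding chain_def by auto
  show ?thesis
    using keys
  proof (induction c rule: frag_induction)
    case zero
    then show ?case by (simp add: bd_def)
  next
    case (one x)
    then show ?case unfolding bd_def using dd_gen[OF assms(1) _ True] by simp
  next
    case (diff a b)
    then show ?case unfolding bd_def by (simp add: frag_extend_diff)
  qed
qed

end
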